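(* Let the spot price $\pi$ have CDF $F_{\pi}$ and monotonically decreasing density $f_{\pi}$ on $[\underline{\pi},\bar{\pi}]$ with $0\le\underline{\pi}<\bar{\pi}$, and let $t_k,t_e,t_s,t_r>0$ with $\frac{t_e}{2}<t_s\le t_e$. Consider the problem (P3): minimize over $(q,p)$ $$\Phi_3(p,q)=q\,t_e\bar{\pi}+\frac{(1-q)t_e}{1-\frac{t_r}{t_k}(1-F_{\pi}(p))}\cdot\frac{\int_{\underline{\pi}}^{p}x f_{\pi}(x)\,dx}{F_{\pi}(p)}$$ subject to $q t_e\le t_s$, $\;\underline{\pi}\le p\le\bar{\pi}$, $\;0\le q\le 1$, $$\frac{(1-q)t_e}{1-\frac{t_r}{t_k}(1-F_{\pi}(p))}\cdot\frac{1}{F_{\pi}(p)}\le t_s,\qquad t_r<\frac{t_k}{2(1-F_{\pi}(p))}.$$ Then the optimal bid price is $p^*=\bar{\pi}$ and the optimal fraction of the job run on the on-demand instance is $q^*=1-\frac{t_s}{t_e}$.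
   Context: Model (persistent request): a user runs a fraction $q$ of a job (execution time $t_e$, deadline $t_s$) on an on-demand instance at price $\bar{\pi}$ and the rest on a spot instance with bid $p$, where an interrupted job resumes when the bid again exceeds the spot price, incurring a recovery time $t_r$ per resumption; spot prices in slots of length $t_k$ are i.i.d. with CDF $F_{\pi}$ and monotonically decreasing density $f_{\pi}$ on $[\underline{\pi},\bar{\pi}]$. *)

theory Defs
  imports "HOL-Analysis.Analysis"
begin

definition Phi3 ::
  "(real \<Rightarrow> real) \<Rightarrow> (real \<Rightarrow> real) \<Rightarrow> real \<Rightarrow> real \<Rightarrow> real \<Rightarrow> real \<Rightarrow> real \<Rightarrow> real \<Rightarrow> real \<Rightarrow> real" where
  "Phi3 F f lo hi tk te tr p q =
     q * te * hi
     + ((1 - q) * te / (1 - tr / tk * (1 - F p)))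
       * (integral {lo..p} (\<lambda>x. x * f x) / F p)"

text \<open>The constraint involving 1/F(p) is only meaningful
  for F(p) > 0 (for F(p) = 0 its left side is +infinity, i.e. infeasible), and the
  constraint t_r < t_k / (2 (1 - F(p))) is written multiplied out, so that it
  reads as the vacuous condition t_r < +infinity when F(p) = 1.\<close>
definition feasible3 ::
  "(real \<Rightarrow> real) \<Rightarrow> real \<Rightarrow> real \<Rightarrow> real \<Rightarrow> real \<Rightarrow> real \<Rightarrow> real \<Rightarrow> real \<Rightarrow> real \<Rightarrow> bool" where
  "feasible3 F lo hi tk te ts tr p q \<longleftrightarrow>
     q * te \<le> ts \<and> lo \<le> p \<and> p \<le> hi \<and> 0 \<le> q \<and> q \<le> 1 \<and>
     F p > 0 \<and>
     ((1 - q) * te / (1 - tr / tk * (1 - F p))) * (1 / F p) \<le> ts \<and>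
     tr * (2 * (1 - F p)) < tk"

end

theory Submission
  imports Defs
begin

theorem proposition3:
  fixes f F :: "real \<Rightarrow> real" and lo hi tk te ts tr :: real
  assumes "0 \<le> lo" and "lo < hi"
    and "\<forall>x\<in>{lo..hi}. 0 \<le> f x"
    and "f integrable_on {lo..hi}"
    and "integral {lo..hi} f = 1"
    and "\<forall>x\<in>{lo..hi}. \<forall>y\<in>{lo..hi}. x \<le> y \<longrightarrow> f y \<le> f x"
    and "\<forall>x\<in>{lo..hi}. F x = integral {lo..x} f"
    and "tk > 0" and "te > 0" and "ts > 0" and "tr > 0"
    and "te / 2 < ts" and "ts \<le> te"
  shows "feasible3 F lo hi tk te ts tr hi (1 - ts / te) \<and>
         (\<forall>p q. feasible3 F lo hi tk te ts tr p q \<longrightarrow>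
            Phi3 F f lo hi tk te tr hi (1 - ts / te) \<le> Phi3 F f lo hi tk te tr p q)"
proof -
  note fi = assms(4)
  have Fhi: "F hi = 1" using assms(2,5,7) by auto
  have fabs: "f absolutely_integrable_on {lo..hi}"
    using nonnegative_absolutely_integrable_1[OF fi] assms(3) by blast
  have xfi: "(\<lambda>x. x * f x) integrable_on {lo..hi}"
    using absolutely_integrable_bounded_measurable_product_real[OF _ _ _ fabs, of "\<lambda>x. x"]
    by (simp add: absolutely_integrable_on_def measurable_completion measurable_restrict_space1)
  have gi: "(\<lambda>x. (hi - x) * f x) integrable_on {lo..hi}"
  proof -
    have "(\<lambda>x. hi * f x - x * f x) integrable_on {lo..hi}"
      using integrable_diff[OF integrable_on_cmult_left[OF fi] xfi] by simp
    then show ?thesis by (simp add: algebra_simps)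
  qed
  define M where "M p = integral {lo..p} (\<lambda>x. x * f x)" for p
  have e: "integral {lo..q} (\<lambda>x. (hi - x) * f x) = F q * hi - M q"
    if "lo \<le> q" "q \<le> hi" for q
  proof -
    have sq: "{lo..q} \<subseteq> {lo..hi}" using that by auto
    have "integral {lo..q} (\<lambda>x. (hi - x) * f x) = integral {lo..q} (\<lambda>x. hi * f x - x * f x)"
      by (simp add: algebra_simps)
    also have "\<dots> = hi * integral {lo..q} f - integral {lo..q} (\<lambda>x. x * f x)"
      using integral_diff[OF integrable_on_cmult_left[OF integrable_subinterval_real[OF fi sq]]
          integrable_subinterval_real[OF xfi sq]] by simp
    finally show ?thesis using assms(7) that M_def by auto
  qed
  have key: "F p * hi - M p \<le> hi - M hi \<and> F p \<le> 1" if p: "lo \<le> p" "p \<le> hi" for p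
  proof -
    have sub: "{lo..p} \<subseteq> {lo..hi}" using p by auto
    have fp: "f integrable_on {lo..p}" using integrable_subinterval_real[OF fi sub] .
    have gp: "(\<lambda>x. (hi - x) * f x) integrable_on {lo..p}" using integrable_subinterval_real[OF gi sub] .
    have "integral {lo..p} (\<lambda>x. (hi - x) * f x) \<le> integral {lo..hi} (\<lambda>x. (hi - x) * f x)"
      by (rule integral_subset_le[OF sub gp gi]) (use assms(3) in auto)
    moreover have "integral {lo..p} f \<le> integral {lo..hi} f"
      by (rule integral_subset_le[OF sub fp fi]) (use assms(3) in auto)
    ultimately show ?thesis using e[OF p] e[of hi] assms(2,5,7) p Fhi by auto
  qed
  have Mhi: "0 \<le> hi - M hi"
  proof -
    have "0 \<le> integral {lo..hi} (\<lambda>x. (hi - x) * f x)"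
      by (rule integral_nonneg[OF gi]) (use assms(3) in auto)
    then show ?thesis using e[of hi] assms(2) Fhi by auto
  qed
  have q0: "0 \<le> 1 - ts / te" "1 - ts / te \<le> 1" "(1 - ts / te) * te \<le> ts"
    using assms(9,10,12,13) by (auto simp: field_simps)
  have feas: "feasible3 F lo hi tk te ts tr hi (1 - ts / te)"
    unfolding feasible3_def using q0 Fhi assms(2,8,9) by (auto simp: field_simps)
  have PhiS: "Phi3 F f lo hi tk te tr hi (1 - ts / te) = te * hi - ts * (hi - M hi)"
    unfolding Phi3_def M_def using Fhi assms(9) by (simp add: field_simps)
  show ?thesis
  proof (intro conjI allI impI feas)
    fix p q assume fq: "feasible3 F lo hi tk te ts tr p q"
    then have p: "lo \<le> p" "p \<le> hi" and q: "0 \<le> q" "q \<le> 1" and Fp: "F p > 0"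
      and cts: "((1 - q) * te / (1 - tr / tk * (1 - F p))) * (1 / F p) \<le> ts"
      and trc: "tr * (2 * (1 - F p)) < tk"
      unfolding feasible3_def by auto
    have Fp1: "F p \<le> 1" and k: "F p * hi - M p \<le> hi - M hi" using key[OF p] by auto
    define D where "D = 1 - tr / tk * (1 - F p)"
    have "tr / tk * (1 - F p) < 1 / 2" using trc assms(8) by (simp add: field_simps)
    then have D0: "D > 0" unfolding D_def by linarith
    have D1: "D \<le> 1" unfolding D_def using Fp1 assms(8,11) by simp
    define c where "c = (1 - q) * te / D * (1 / F p)"
    have c0: "c \<ge> 0" unfolding c_def using q D0 Fp assms(9) by simp
    have cts': "c \<le> ts" using cts unfolding c_def D_def .
    have Phi: "Phi3 F f lo hi tk te tr p q = te * hi - c * (D * F p * hi - M p)"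
      unfolding Phi3_def M_def[symmetric] D_def[symmetric] c_def using D0 Fp
      by (simp add: field_simps)
    have X: "D * F p * hi - M p \<le> hi - M hi"
    proof -
      have "D * F p * hi \<le> F p * hi"
        using D1 Fp assms(1,2) by (simp add: mult_right_le_one_le mult_le_cancel_right1)
      then show ?thesis using k by linarith
    qed
    have "c * (D * F p * hi - M p) \<le> ts * (hi - M hi)"
    proof (cases "D * F p * hi - M p \<ge> 0")
      case True
      have "c * (D * F p * hi - M p) \<le> ts * (D * F p * hi - M p)"
        using mult_right_mono[OF cts' True] .
      also have "\<dots> \<le> ts * (hi - M hi)" using X assms(10) by simp
      finally show ?thesis .
    next
      case False
      then have "c * (D * F p * hi - M p) \<le> 0" using c0 by (simp add: mult_nonneg_nonpos)
      also have "0 \<le> ts * (hi - M hi)" using Mhi assms(10) by simp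
      finally show ?thesis .
    qed
    then show "Phi3 F f lo hi tk te tr hi (1 - ts / te) \<le> Phi3 F f lo hi tk te tr p q"
      using Phi PhiS by linarith
  qed
qed

end
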